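(* Let $V$ be a real vector space and $C$ a cone in $V$. Suppose $Y$ is a decomposably $C$-antichain-convex subset of $V$ and put $K=\operatorname{co}(C\cup\{0\})$. Then: (1) for each $y\in\operatorname{co}(Y)$ there exists $z\in Y$ with $z\in y+K$; (2) for each $y\in\operatorname{co}(Y)$ there exists $x\in Y$ with $y\in x+K$.
   Context: A cone in a real vector space $V$ is a subset $C$ with $\lambda C\subseteq C$ for all $\lambda>0$ (it may be empty and need not contain $0$). A subset $S\subseteq V$ is $C$-antichain-convex iff for all $x,y\in S$ and $\lambda\in[0,1]$ with $y-x\notin C\cup(-C)$ one has $\lambda x+(1-\lambda)y\in S$. A set $S$ is decomposably $C$-antichain-convex iff $S=S_1+\dots+S_n$ (Minkowski sum) for some finite collection of $C$-antichain-convex subsets $S_1,\dots,S_n$ of $V$. $\operatorname{co}$ denotes the convex hull. *)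

theory Defs
  imports "HOL-Analysis.Analysis"
begin

definition is_cone :: "'a::real_vector set \<Rightarrow> bool" where
  "is_cone C \<longleftrightarrow> (\<forall>t::real. \<forall>c\<in>C. t > 0 \<longrightarrow> t *\<^sub>R c \<in> C)"

definition antichain_convex :: "'a::real_vector set \<Rightarrow> 'a set \<Rightarrow> bool" where
  "antichain_convex C S \<longleftrightarrow>
     (\<forall>x\<in>S. \<forall>y\<in>S. \<forall>t::real. 0 \<le> t \<and> t \<le> 1 \<and> y - x \<notin> C \<union> uminus ` C
        \<longrightarrow> t *\<^sub>R x + (1 - t) *\<^sub>R y \<in> S)"

fun minkowski_sum :: "'a::real_vector set list \<Rightarrow> 'a set" where
  "minkowski_sum [] = {0}"
| "minkowski_sum (A # As) = {a + b | a b. a \<in> A \<and> b \<in> minkowski_sum As}"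

definition decomp_antichain_convex :: "'a::real_vector set \<Rightarrow> 'a set \<Rightarrow> bool" where
  "decomp_antichain_convex C S \<longleftrightarrow>
     (\<exists>Ss. Ss \<noteq> [] \<and> (\<forall>T\<in>set Ss. antichain_convex C T) \<and> S = minkowski_sum Ss)"

end

theory Submission
  imports Defs
begin

locale kprops =
  fixes C K :: "'a::real_vector set"
  assumes K0: "0 \<in> K"
    and Kadd: "\<And>x y. x \<in> K \<Longrightarrow> y \<in> K \<Longrightarrow> x + y \<in> K"
    and Kscale: "\<And>x a. x \<in> K \<Longrightarrow> a \<ge> 0 \<Longrightarrow> a *\<^sub>R x \<in> K"
    and CK: "C \<subseteq> K"
begin

lemma Kconv: "convex K"
  unfolding convex_def using Kadd Kscale by blast

lemma two_point:
  assumes ac: "antichain_convex C S" and x: "x \<in> S" and y: "y \<in> S" and t: "0 \<le> t" "t \<le> 1"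
  shows "(\<exists>z\<in>S. z - (t *\<^sub>R x + (1 - t) *\<^sub>R y) \<in> K) \<and> (\<exists>w\<in>S. (t *\<^sub>R x + (1 - t) *\<^sub>R y) - w \<in> K)"
proof (cases "y - x \<in> C \<union> uminus ` C")
  case False
  then have "t *\<^sub>R x + (1 - t) *\<^sub>R y \<in> S" using ac x y t unfolding antichain_convex_def by blast
  then show ?thesis using K0 by force
next
  case True
  then show ?thesis
  proof
    assume c: "y - x \<in> C"
    have e1: "y - (t *\<^sub>R x + (1 - t) *\<^sub>R y) = t *\<^sub>R (y - x)" by (simp add: algebra_simps)
    have e2: "(t *\<^sub>R x + (1 - t) *\<^sub>R y) - x = (1 - t) *\<^sub>R (y - x)" by (simp add: algebra_simps)
    have "t *\<^sub>R (y - x) \<in> K" "(1 - t) *\<^sub>R (y - x) \<in> K" using c CK Kscale t by auto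
    then show ?thesis using x y e1 e2 by metis
  next
    assume "y - x \<in> uminus ` C"
    then obtain c where c0: "c \<in> C" "y - x = - c" by blast
    have "x - y = - (y - x)" by simp
    then have c: "x - y \<in> C" using c0 by simp
    have e1: "x - (t *\<^sub>R x + (1 - t) *\<^sub>R y) = (1 - t) *\<^sub>R (x - y)" by (simp add: algebra_simps)
    have e2: "(t *\<^sub>R x + (1 - t) *\<^sub>R y) - y = t *\<^sub>R (x - y)" by (simp add: algebra_simps)
    have "t *\<^sub>R (x - y) \<in> K" "(1 - t) *\<^sub>R (x - y) \<in> K" using c CK Kscale t by auto
    then show ?thesis using x y e1 e2 by metis
  qed
qed

lemma single:
  assumes ac: "antichain_convex C S"
  shows "convex hull S \<subseteq> {y. \<exists>z\<in>S. z - y \<in> K} \<inter> {y. \<exists>w\<in>S. y - w \<in> K}"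
proof (rule hull_minimal)
  show "S \<subseteq> {y. \<exists>z\<in>S. z - y \<in> K} \<inter> {y. \<exists>w\<in>S. y - w \<in> K}" using K0 by force
  show "convex ({y. \<exists>z\<in>S. z - y \<in> K} \<inter> {y. \<exists>w\<in>S. y - w \<in> K})"
  proof (rule convex_Int)
    show "convex {y. \<exists>z\<in>S. z - y \<in> K}"
    proof (rule convexI)
      fix y1 y2 and u v :: real
      assume "y1 \<in> {y. \<exists>z\<in>S. z - y \<in> K}" "y2 \<in> {y. \<exists>z\<in>S. z - y \<in> K}"
        and uv: "0 \<le> u" "0 \<le> v" "u + v = 1"
      then obtain z1 z2 where z: "z1 \<in> S" "z2 \<in> S" "z1 - y1 \<in> K" "z2 - y2 \<in> K" by blast
      have v: "v = 1 - u" using uv by simp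
      obtain z where zz: "z \<in> S" "z - (u *\<^sub>R z1 + (1 - u) *\<^sub>R z2) \<in> K"
        using two_point[OF ac z(1,2), of u] uv by auto
      have "(u *\<^sub>R z1 + (1 - u) *\<^sub>R z2) - (u *\<^sub>R y1 + v *\<^sub>R y2) = u *\<^sub>R (z1 - y1) + v *\<^sub>R (z2 - y2)"
        unfolding v by (simp add: algebra_simps)
      also have "\<dots> \<in> K" using z uv Kadd Kscale by simp
      finally have "(z - (u *\<^sub>R z1 + (1 - u) *\<^sub>R z2)) + ((u *\<^sub>R z1 + (1 - u) *\<^sub>R z2) - (u *\<^sub>R y1 + v *\<^sub>R y2)) \<in> K"
        using Kadd[OF zz(2)] by blast
      moreover have "(z - (u *\<^sub>R z1 + (1 - u) *\<^sub>R z2)) + ((u *\<^sub>R z1 + (1 - u) *\<^sub>R z2) - (u *\<^sub>R y1 + v *\<^sub>R y2)) = z - (u *\<^sub>R y1 + v *\<^sub>R y2)"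
        by (simp only: diff_add_cancel diff_add_eq add_diff_eq)
      ultimately have "z - (u *\<^sub>R y1 + v *\<^sub>R y2) \<in> K" by simp
      then show "u *\<^sub>R y1 + v *\<^sub>R y2 \<in> {y. \<exists>z\<in>S. z - y \<in> K}" using zz(1) by blast
    qed
    show "convex {y. \<exists>w\<in>S. y - w \<in> K}"
    proof (rule convexI)
      fix y1 y2 and u v :: real
      assume "y1 \<in> {y. \<exists>w\<in>S. y - w \<in> K}" "y2 \<in> {y. \<exists>w\<in>S. y - w \<in> K}"
        and uv: "0 \<le> u" "0 \<le> v" "u + v = 1"
      then obtain z1 z2 where z: "z1 \<in> S" "z2 \<in> S" "y1 - z1 \<in> K" "y2 - z2 \<in> K" by blast
      have v: "v = 1 - u" using uv by simp
      obtain z where zz: "z \<in> S" "(u *\<^sub>R z1 + (1 - u) *\<^sub>R z2) - z \<in> K"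
        using two_point[OF ac z(1,2), of u] uv by auto
      have "(u *\<^sub>R y1 + v *\<^sub>R y2) - (u *\<^sub>R z1 + (1 - u) *\<^sub>R z2) = u *\<^sub>R (y1 - z1) + v *\<^sub>R (y2 - z2)"
        unfolding v by (simp add: algebra_simps)
      also have "\<dots> \<in> K" using z uv Kadd Kscale by simp
      finally have "((u *\<^sub>R y1 + v *\<^sub>R y2) - (u *\<^sub>R z1 + (1 - u) *\<^sub>R z2)) + ((u *\<^sub>R z1 + (1 - u) *\<^sub>R z2) - z) \<in> K"
        using Kadd[OF _ zz(2)] by blast
      then have "(u *\<^sub>R y1 + v *\<^sub>R y2) - z \<in> K" by simp
      then show "u *\<^sub>R y1 + v *\<^sub>R y2 \<in> {y. \<exists>w\<in>S. y - w \<in> K}" using zz(1) by blast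
    qed
  qed
qed

lemma msum:
  assumes "\<forall>T\<in>set Ss. antichain_convex C T"
  shows "convex hull (minkowski_sum Ss) \<subseteq>
     {y. \<exists>z\<in>minkowski_sum Ss. z - y \<in> K} \<inter> {y. \<exists>w\<in>minkowski_sum Ss. y - w \<in> K}"
  using assms
proof (induction Ss)
  case Nil
  then show ?case using K0 by simp
next
  case (Cons A As)
  have eq: "minkowski_sum (A # As) = A + minkowski_sum As"
    by (auto simp: set_plus_def)
  show ?case
  proof
    fix y assume "y \<in> convex hull minkowski_sum (A # As)"
    then obtain a b where ab: "a \<in> convex hull A" "b \<in> convex hull minkowski_sum As" "y = a + b"
      unfolding eq convex_hull_set_plus by (auto simp: set_plus_def)
    have "antichain_convex C A" using Cons.prems by simp
    then have "a \<in> {y. \<exists>z\<in>A. z - y \<in> K} \<inter> {y. \<exists>w\<in>A. y - w \<in> K}"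
      using single ab(1) by blast
    then obtain za wa where
      a: "za \<in> A" "za - a \<in> K" "wa \<in> A" "a - wa \<in> K" by blast
    have "b \<in> {y. \<exists>z\<in>minkowski_sum As. z - y \<in> K} \<inter> {y. \<exists>w\<in>minkowski_sum As. y - w \<in> K}"
      using Cons.IH Cons.prems ab(2) by auto
    then obtain zb wb where
      b: "zb \<in> minkowski_sum As" "zb - b \<in> K" "wb \<in> minkowski_sum As" "b - wb \<in> K" by blast
    have "za + zb \<in> minkowski_sum (A # As)" "wa + wb \<in> minkowski_sum (A # As)" using a b by auto
    moreover have "(za + zb) - y \<in> K" using Kadd[OF a(2) b(2)] ab(3) by (simp add: algebra_simps)
    moreover have "y - (wa + wb) \<in> K" using Kadd[OF a(4) b(4)] ab(3) by (simp add: algebra_simps)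
    ultimately show "y \<in> {y. \<exists>z\<in>minkowski_sum (A # As). z - y \<in> K} \<inter>
        {y. \<exists>w\<in>minkowski_sum (A # As). y - w \<in> K}" by blast
  qed
qed

end

theorem theorem3:
  fixes C Y :: "'a::real_vector set"
  assumes "is_cone C"
    and "decomp_antichain_convex C Y"
  defines "K \<equiv> convex hull (C \<union> {0})"
  shows "(\<forall>y\<in>convex hull Y. \<exists>z\<in>Y. z \<in> (\<lambda>k. y + k) ` K)
       \<and> (\<forall>y\<in>convex hull Y. \<exists>x\<in>Y. y \<in> (\<lambda>k. x + k) ` K)"
proof -
  have "cone (C \<union> {0})" using assms(1) unfolding cone_def is_cone_def
    by (auto simp: le_less)
  then have cc: "convex K \<and> cone K" unfolding K_def using cone_convex_hull by auto
  then have kp: "kprops C K"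
    unfolding kprops_def using convex_cone[of K] K_def
    by (auto simp: hull_inc cone_def)
  obtain Ss where Ss: "\<forall>T\<in>set Ss. antichain_convex C T" "Y = minkowski_sum Ss"
    using assms(2) unfolding decomp_antichain_convex_def by blast
  have m: "convex hull Y \<subseteq> {y. \<exists>z\<in>Y. z - y \<in> K} \<inter> {y. \<exists>w\<in>Y. y - w \<in> K}"
    using kprops.msum[OF kp Ss(1)] Ss(2) by simp
  show ?thesis
  proof safe
    fix y assume "y \<in> convex hull Y"
    then obtain z where "z \<in> Y" "z - y \<in> K" using m by blast
    then show "\<exists>z\<in>Y. z \<in> (\<lambda>k. y + k) ` K" by (intro bexI[of _ z] image_eqI[where x="z - y"]) auto
  next
    fix y assume "y \<in> convex hull Y"
    then obtain w where "w \<in> Y" "y - w \<in> K" using m by blast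
    then show "\<exists>x\<in>Y. y \<in> (\<lambda>k. x + k) ` K" by (intro bexI[of _ w] image_eqI[where x="y - w"]) auto
  qed
qed

end
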